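(* Let $\ell\ge3$ be an odd integer and $q=(\ell^2-1)/2$, so $2q+1=\ell^2$. Define $g:\mathbb Z_{2q+1}\to\mathbb R$ by $g(n)=\sin(2\pi|n|/\ell)$ if $|n|\le\ell$ and $g(n)=0$ otherwise ($|n|\le q$). Then for $|n|\le q$, $$\widehat g(n)=\frac{2\sin^2(\pi n/\ell)\sin(2\pi/\ell)}{\ell\,\big(\cos(2\pi n/\ell^2)-\cos(2\pi/\ell)\big)},$$ and $f_\star=g-\widehat g$ satisfies $\widehat{f_\star}=-f_\star$, $f_\star(0)=0$, $f_\star(n)\ge0$ for $\ell\le|n|\le q$, and a positive multiple of $f_\star$ lies in $\mathcal A^{\rm disc}_-(q)$ with $k_{-f_\star}=\ell$. Consequently $\mathbb A^{\rm disc}_-(q)\le\ell=\sqrt{2q+1}$.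
   Context: $\mathbb Z_{2q+1}$ is the integers modulo $2q+1$ with representatives $\{-q,\dots,q\}$, and $|n|$ denotes the absolute value of the representative of $n$. The discrete Fourier transform is $\widehat f(k)=\frac1{\sqrt{2q+1}}\sum_{n=-q}^qf(n)e^{-2\pi ikn/(2q+1)}$ (at $n=0$ the formula for $\widehat g$ is interpreted as $0$). For $s\in\{+1,-1\}$, $\mathcal A^{\rm disc}_s(q)$ is the set of even $f:\mathbb Z_{2q+1}\to\mathbb R$ with $sf(0)\le0$, $\widehat f(0)\le0$, $f(\pm q)\ge1$ and $s\widehat f(\pm q)\ge1$; $k_{sf}$ is the smallest nonnegative integer $k$ such that $f(n)\ge0$ and $s\widehat f(n)\ge0$ whenever $k\le|n|\le q$; and $\mathbb A^{\rm disc}_s(q)=\min\{k_{sf}: f\in\mathcal A^{\rm disc}_s(q)\}$. *)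

theory Defs
  imports "HOL-Analysis.Analysis"
begin

text \<open>Functions on Z_{2q+1} are modelled as int => real; only the values on the
representatives -q..q matter.  The DFT is complex-valued.\<close>

definition dft :: "nat \<Rightarrow> (int \<Rightarrow> real) \<Rightarrow> int \<Rightarrow> complex" where
  "dft q f k = (1 / of_real (sqrt (real (2*q+1)))) *
     (\<Sum>n\<in>{-int q..int q}. of_real (f n) *
        exp (- (2 * of_real pi * \<i> * of_int k * of_int n / of_nat (2*q+1))))"

definition even_disc :: "nat \<Rightarrow> (int \<Rightarrow> real) \<Rightarrow> bool" where
  "even_disc q f \<longleftrightarrow> (\<forall>n. \<bar>n\<bar> \<le> int q \<longrightarrow> f (-n) = f n)"

text \<open>For even real f the DFT is real; we use its real part.\<close>
definition A_disc :: "real \<Rightarrow> nat \<Rightarrow> (int \<Rightarrow> real) set" where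
  "A_disc s q = {f. even_disc q f \<and> s * f 0 \<le> 0 \<and> Re (dft q f 0) \<le> 0 \<and>
      f (int q) \<ge> 1 \<and> f (- int q) \<ge> 1 \<and>
      s * Re (dft q f (int q)) \<ge> 1 \<and> s * Re (dft q f (- int q)) \<ge> 1}"

definition k_sf :: "real \<Rightarrow> nat \<Rightarrow> (int \<Rightarrow> real) \<Rightarrow> nat" where
  "k_sf s q f = (LEAST k::nat. \<forall>n. int k \<le> \<bar>n\<bar> \<and> \<bar>n\<bar> \<le> int q \<longrightarrow>
      f n \<ge> 0 \<and> s * Re (dft q f n) \<ge> 0)"

definition AA_disc :: "real \<Rightarrow> nat \<Rightarrow> nat" where
  "AA_disc s q = Inf (k_sf s q ` A_disc s q)"

end

theory Submission imports Defs begin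

lemma prod_sin: "2 * sin (A::real) * sin B = cos (B - A) - cos (B + A)"
  by (simp add: cos_diff cos_add)

lemma tele: "2 * sin y * (\<Sum>n=1..m. sin (2 * real n * y)) = cos y - cos ((2 * real m + 1) * y)"
proof (induction m)
  case 0 then show ?case by simp
next
  case (Suc m)
  have "2 * sin y * (\<Sum>n=1..Suc m. sin (2 * real n * y))
     = 2 * sin y * (\<Sum>n=1..m. sin (2 * real n * y)) + 2 * sin y * sin (2 * real (Suc m) * y)"
    by (simp add: distrib_left)
  also have "2 * sin y * sin (2 * real (Suc m) * y) = cos ((2 * real m + 1) * y) - cos ((2 * real (Suc m) + 1) * y)"
    by (subst prod_sin) (simp add: algebra_simps)
  finally show ?case using Suc by simp
qed

lemma trig_id:
  fixes a b c :: real
  shows "sin (a - b) * (cos (a + b) - cos (a + b + 2*c)) + sin (a + b) * (cos (a - b) - cos (a - b - 2*c))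
        = 2 * (sin c)^2 * sin (2*a)"
proof -
  have "cos (a + b) - cos (a + b + 2*c) = 2 * sin (a + b + c) * sin c"
    using prod_sin[of c "a+b+c"] by (simp add: algebra_simps)
  moreover have "cos (a - b) - cos (a - b - 2*c) = - 2 * sin (a - b - c) * sin c"
    using prod_sin[of c "a-b-c"] by (simp add: algebra_simps)
  moreover have "sin (a - b) * sin (a + b + c) - sin (a + b) * sin (a - b - c) = sin c * sin (2*a)"
  proof -
    have e1: "sin (a + b + c) = sin (a+b) * cos c + cos (a+b) * sin c" by (rule sin_add)
    have e2: "sin (a - b - c) = sin (a-b) * cos c - cos (a-b) * sin c" by (rule sin_diff)
    have e3: "sin (2*a) = sin ((a+b) + (a-b))" by simp
    show ?thesis unfolding e1 e2 e3 sin_add[of "a+b" "a-b"] by (simp add: algebra_simps)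
  qed
  ultimately have "sin (a - b) * (cos (a + b) - cos (a + b + 2*c)) + sin (a + b) * (cos (a - b) - cos (a - b - 2*c))
     = 2 * sin c * (sin (a - b) * sin (a + b + c) - sin (a + b) * sin (a - b - c))"
    by (simp only:) (simp add: algebra_simps)
  also have "\<dots> = 2 * sin c * (sin c * sin (2*a))" using \<open>sin (a - b) * sin (a + b + c) - sin (a + b) * sin (a - b - c) = sin c * sin (2*a)\<close> by simp
  finally show ?thesis by (simp add: power2_eq_square)
qed

lemma cos_2pi_shift: "cos (x + 2 * pi) = cos (x::real)"
  by (simp add: cos_add)

lemma T_sum:
  fixes a b :: real and l :: nat
  assumes la: "real l * a = pi"
  shows "(cos (2*b) - cos (2*a)) * (\<Sum>n=1..l. sin (2 * real n * a) * cos (2 * real n * b))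
       = (sin (real l * b))^2 * sin (2*a)"
proof -
  define Sp where "Sp = (\<Sum>n=1..l. sin (2 * real n * (a+b)))"
  define Sm where "Sm = (\<Sum>n=1..l. sin (2 * real n * (a-b)))"
  have hp: "2 * sin (a+b) * Sp = cos (a+b) - cos (a + b + 2 * (real l * b))"
  proof -
    have "(2 * real l + 1) * (a + b) = (a + b + 2 * (real l * b)) + 2 * pi"
      using la by (simp add: algebra_simps)
    then show ?thesis unfolding Sp_def tele by simp
  qed
  have hm: "2 * sin (a-b) * Sm = cos (a-b) - cos (a - b - 2 * (real l * b))"
  proof -
    have "(2 * real l + 1) * (a - b) = (a - b - 2 * (real l * b)) + 2 * pi"
      using la by (simp add: algebra_simps)
    then show ?thesis unfolding Sm_def tele by simp
  qed
  have hs: "(\<Sum>n=1..l. sin (2 * real n * a) * cos (2 * real n * b)) = (Sp + Sm) / 2"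
  proof -
    have "(\<Sum>n=1..l. sin (2 * real n * a) * cos (2 * real n * b)) = (\<Sum>n=1..l. (sin (2 * real n * (a+b)) + sin (2 * real n * (a-b))) / 2)"
      by (rule sum.cong) (simp_all add: distrib_left right_diff_distrib sin_add sin_diff)
    then show ?thesis unfolding Sp_def Sm_def by (simp add: sum.distrib sum_divide_distrib[symmetric])
  qed
  have hc: "cos (2*b) - cos (2*a) = 2 * sin (a+b) * sin (a-b)"
    using prod_sin[of "a+b" "a-b"] by (simp add: algebra_simps)
  have "(cos (2*b) - cos (2*a)) * (\<Sum>n=1..l. sin (2 * real n * a) * cos (2 * real n * b))
     = (sin (a-b) * (2 * sin (a+b) * Sp) + sin (a+b) * (2 * sin (a-b) * Sm)) / 2"
    unfolding hs hc by (simp add: algebra_simps)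
  also have "\<dots> = (sin (a - b) * (cos (a + b) - cos (a + b + 2*(real l * b))) + sin (a + b) * (cos (a - b) - cos (a - b - 2*(real l * b)))) / 2"
    unfolding hp hm ..
  also have "\<dots> = (sin (real l * b))^2 * sin (2*a)" unfolding trig_id by simp
  finally show ?thesis .
qed

lemma T_sum_deg:
  fixes a b :: real and l :: nat
  assumes la: "real l * a = pi" and s2: "sin (2*a) \<noteq> 0" and b: "b = a \<or> b = -a"
  shows "(\<Sum>n=1..l. sin (2 * real n * a) * cos (2 * real n * b)) = 0"
proof -
  have "\<And>n. sin (2 * real n * a) * cos (2 * real n * b) = sin (2 * real n * (2*a)) / 2"
  proof -
    fix n
    have c: "cos (2 * real n * b) = cos (2 * real n * a)" using b by auto
    have "sin (2 * real n * (2*a)) = sin (2 * (2 * real n * a))" by (simp add: algebra_simps)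
    also have "\<dots> = 2 * sin (2 * real n * a) * cos (2 * real n * a)" by (rule sin_double)
    finally show "sin (2 * real n * a) * cos (2 * real n * b) = sin (2 * real n * (2*a)) / 2" using c by simp
  qed
  then have e: "(\<Sum>n=1..l. sin (2 * real n * a) * cos (2 * real n * b)) = (\<Sum>n=1..l. sin (2 * real n * (2*a))) / 2"
    unfolding sum_divide_distrib by (rule sum.cong[OF refl])
  have "(2 * real l + 1) * (2 * a) = 2*a + 2 * pi + 2 * pi" using la by (simp add: algebra_simps)
  then have "2 * sin (2*a) * (\<Sum>n=1..l. sin (2 * real n * (2*a))) = 0"
    unfolding tele using cos_2pi_shift[of "2*a+2*pi"] by simp
  with s2 have "(\<Sum>n=1..l. sin (2 * real n * (2*a))) = 0" by simp
  with e show ?thesis by simp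
qed

lemma sum_sym:
  fixes h :: "int \<Rightarrow> 'a::comm_monoid_add"
  shows "(\<Sum>n\<in>{-int m..int m}. h n) = h 0 + (\<Sum>j=1..m. h (int j) + h (- int j))"
proof (induction m)
  case 0 then show ?case by simp
next
  case (Suc m)
  have e: "{-int (Suc m)..int (Suc m)} = insert (int (Suc m)) (insert (-int (Suc m)) {-int m..int m})"
    by auto
  show ?case unfolding e using Suc by (simp add: algebra_simps)
qed

lemma expo_cis: "exp (- (2 * of_real pi * \<i> * of_int k * of_int n / of_nat N)) = cis (- (2*pi*real_of_int k*real_of_int n/real N))"
  unfolding cis_conv_exp by (simp add: algebra_simps)

lemma cis_pair: "cis (- x) + cis x = complex_of_real (2 * cos x)"
  by (simp add: complex_eq_iff cis.sel)

lemma dft_even: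
  fixes f :: "int \<Rightarrow> real"
  assumes L: "L \<le> q" and supp: "\<And>n. \<bar>n\<bar> > int L \<Longrightarrow> f n = 0" and ev: "\<And>n. f (-n) = f n"
  shows "dft q f k = (1 / of_real (sqrt (real (2*q+1)))) *
     complex_of_real (f 0 + (\<Sum>j=1..L. 2 * f (int j) * cos (2*pi*real_of_int k*real j/real (2*q+1))))"
proof -
  let ?t = "\<lambda>n. of_real (f n) * exp (- (2 * of_real pi * \<i> * of_int k * of_int n / of_nat (2*q+1)))"
  have "(\<Sum>n\<in>{-int q..int q}. ?t n) = (\<Sum>n\<in>{-int L..int L}. ?t n)"
    by (rule sum.mono_neutral_right) (use L supp in auto)
  also have "\<dots> = ?t 0 + (\<Sum>j=1..L. ?t (int j) + ?t (- int j))" by (rule sum_sym)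
  also have "\<dots> = complex_of_real (f 0 + (\<Sum>j=1..L. 2 * f (int j) * cos (2*pi*real_of_int k*real j/real (2*q+1))))"
  proof -
    have "?t (int j) + ?t (- int j) = complex_of_real (2 * f (int j) * cos (2*pi*real_of_int k*real j/real (2*q+1)))" for j
    proof -
      have "?t (int j) + ?t (- int j) = of_real (f (int j)) * (cis (- (2*pi*real_of_int k*real j/real (2*q+1))) + cis (2*pi*real_of_int k*real j/real (2*q+1)))"
        unfolding expo_cis ev by (simp add: algebra_simps)
      also have "\<dots> = complex_of_real (2 * f (int j) * cos (2*pi*real_of_int k*real j/real (2*q+1)))"
        unfolding cis_pair by simp
      finally show ?thesis .
    qed
    then show ?thesis by simp
  qed
  finally show ?thesis unfolding dft_def by simp
qed

lemma sum_int_sym_reindex: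
  fixes F :: "int \<Rightarrow> 'a::comm_monoid_add"
  shows "(\<Sum>m\<in>{-int q..int q}. F m) = (\<Sum>j<2*q+1. F (int j - int q))"
  by (rule sum.reindex_bij_witness[where j="\<lambda>m. nat (m + int q)" and i="\<lambda>j. int j - int q"]) auto

lemma orth:
  fixes t :: int and q :: nat
  assumes t: "\<bar>t\<bar> \<le> 2 * int q"
  shows "(\<Sum>m\<in>{-int q..int q}. exp (- (2 * of_real pi * \<i> * of_int m * of_int t / of_nat (2*q+1))))
     = (if t = 0 then of_nat (2*q+1) else 0)"
proof (cases "t = 0")
  case True then show ?thesis by simp
next
  case False
  define N where "N = 2*q+1"
  define z where "z = exp (- (2 * of_real pi * \<i> * of_int t / of_nat N))"
  define c where "c = exp (2 * of_real pi * \<i> * of_int q * of_int t / of_nat N)"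
  have tm: "exp (- (2 * of_real pi * \<i> * of_int (int j - int q) * of_int t / of_nat N)) = c * z ^ j" for j
  proof -
    have "c * z ^ j = exp (2 * of_real pi * \<i> * of_int q * of_int t / of_nat N + of_nat j * (- (2 * of_real pi * \<i> * of_int t / of_nat N)))"
      unfolding c_def z_def exp_add exp_of_nat_mult ..
    also have "\<dots> = exp (- (2 * of_real pi * \<i> * of_int (int j - int q) * of_int t / of_nat N))"
      by (rule arg_cong[where f=exp]) (simp add: diff_divide_distrib algebra_simps)
    finally show ?thesis by simp
  qed
  have zN: "z ^ N = 1"
  proof -
    have "z ^ N = exp (of_nat N * (- (2 * of_real pi * \<i> * of_int t / of_nat N)))"
      unfolding z_def exp_of_nat_mult ..
    also have "of_nat N * (- (2 * of_real pi * \<i> * of_int t / of_nat N)) = (2 * of_int (-t) * of_real pi) * \<i>"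
    proof -
      have nz: "(of_nat N::complex) \<noteq> 0" unfolding N_def by (simp only: of_nat_eq_0_iff)
      have "of_nat N * (- (2 * of_real pi * \<i> * of_int t / of_nat N)) = - (2 * of_real pi * \<i> * of_int t)"
        using nz by simp
      then show ?thesis by simp
    qed
    also have "exp \<dots> = 1" using exp_integer_2pi[of "of_int (-t)"] by simp
    finally show ?thesis .
  qed
  have z1: "z \<noteq> 1"
  proof
    assume "z = 1"
    then obtain n :: int where n: "Im (- (2 * of_real pi * \<i> * of_int t / of_nat N)) = of_int (2 * n) * pi"
      unfolding z_def exp_eq_1 by blast
    have "Im (- (2 * of_real pi * \<i> * of_int t / of_nat N)) = - (2 * pi * t / N)"
      by (simp add: Im_divide_of_nat)
    with n have "- (2 * pi * t / N) = 2 * n * pi" by simp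
    moreover have "real N > 0" unfolding N_def by simp
    ultimately have "(2*pi) * (- real_of_int t) = (2*pi) * (real_of_int n * real N)" by (simp add: field_simps)
    then have "- (real_of_int t) = real_of_int n * real N" using pi_gt_zero by (simp only: mult_left_cancel)
    then have "- t = n * int N" by (metis of_int_eq_iff of_int_mult of_int_of_nat_eq of_int_minus)
    moreover have "\<bar>t\<bar> < int N" using t unfolding N_def by simp
    ultimately have tN: "\<bar>t\<bar> = \<bar>n\<bar> * int N" "\<bar>t\<bar> < int N"
      by (metis abs_minus_cancel abs_mult abs_of_nat, simp)
    then have "n \<noteq> 0" using False by auto
    then have "\<bar>n\<bar> * int N \<ge> 1 * int N" by (intro mult_right_mono) auto
    with tN show False by simp
  qed
  have "(\<Sum>m\<in>{-int q..int q}. exp (- (2 * of_real pi * \<i> * of_int m * of_int t / of_nat (2*q+1))))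
      = (\<Sum>j<N. c * z ^ j)"
    unfolding sum_int_sym_reindex N_def[symmetric] using tm by simp
  also have "\<dots> = c * ((z ^ N - 1) / (z - 1))" unfolding sum_distrib_left[symmetric] geometric_sum[OF z1] ..
  also have "\<dots> = 0" using zN by simp
  finally show ?thesis using False by simp
qed

lemma aux_ssN:
  fixes r s N :: complex
  assumes "r * r = N" "s * r = 1"
  shows "s * s * N = 1"
proof -
  have "s * s * N = (s * r) * (s * r)" unfolding assms(1)[symmetric] by (simp only: mult_ac)
  then show ?thesis using assms(2) by simp
qed

lemma dft_dft:
  fixes f :: "int \<Rightarrow> real"
  assumes rl: "\<And>m. \<bar>m\<bar> \<le> int q \<Longrightarrow> dft q f m = of_real (Re (dft q f m))"
    and n: "\<bar>n\<bar> \<le> int q"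
  shows "dft q (\<lambda>m. Re (dft q f m)) n = of_real (f (-n))"
proof -
  define s :: complex where "s = 1 / of_real (sqrt (real (2*q+1)))"
  define E where "E = (\<lambda>a b::int. exp (- (2 * of_real pi * \<i> * of_int a * of_int b / of_nat (2*q+1))))"
  have D: "dft q f m = s * (\<Sum>j\<in>{-int q..int q}. of_real (f j) * E m j)" for m
    unfolding dft_def s_def E_def ..
  have "dft q (\<lambda>m. Re (dft q f m)) n = s * (\<Sum>m\<in>{-int q..int q}. dft q f m * E n m)"
    unfolding dft_def[of q "\<lambda>m. Re (dft q f m)"] s_def E_def
    by (rule arg_cong[where f="\<lambda>x. _ * x"], rule sum.cong) (use rl in \<open>auto simp del: of_real_Re\<close>)
  also have "\<dots> = s * s * (\<Sum>m\<in>{-int q..int q}. \<Sum>j\<in>{-int q..int q}. of_real (f j) * (E m j * E n m))"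
    unfolding D by (simp add: sum_distrib_left sum_distrib_right mult.assoc)
  also have "\<dots> = s * s * (\<Sum>j\<in>{-int q..int q}. of_real (f j) * (\<Sum>m\<in>{-int q..int q}. E m (j + n)))"
  proof -
    have "E m j * E n m = E m (j + n)" for m j
      unfolding E_def exp_add[symmetric]
      by (rule arg_cong[where f=exp]) (simp add: add_divide_distrib[symmetric] algebra_simps)
    then show ?thesis by (subst sum.swap) (simp add: sum_distrib_left)
  qed
  also have "\<dots> = s * s * (\<Sum>j\<in>{-int q..int q}. of_real (f j) * (if j = -n then of_nat (2*q+1) else 0))"
  proof -
    have "(\<Sum>m\<in>{-int q..int q}. E m (j + n)) = (if j = -n then of_nat (2*q+1) else 0)" if "j \<in> {-int q..int q}" for j
    proof -
      have "\<bar>j + n\<bar> \<le> 2 * int q" using that n by auto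
      from orth[OF this] show ?thesis unfolding E_def by (simp add: eq_neg_iff_add_eq_0)
    qed
    then show ?thesis by (intro arg_cong[where f="\<lambda>x. _ * x"] sum.cong) auto
  qed
  also have "\<dots> = s * s * of_nat (2*q+1) * of_real (f (-n))"
    using n by (simp add: if_distrib cong: if_cong) linarith
  also have "s * s * of_nat (2*q+1) = 1"
  proof -
    have "of_real (sqrt (real (2*q+1))) * of_real (sqrt (real (2*q+1))) = (of_nat (2*q+1) :: complex)"
    proof -
      have "of_real (sqrt (real (2*q+1))) * of_real (sqrt (real (2*q+1))) = (of_real (real (2*q+1)) :: complex)"
        by (simp flip: of_real_mult)
      then show ?thesis by (simp only: of_real_of_nat_eq)
    qed
    moreover have "(of_real (sqrt (real (2*q+1))) :: complex) \<noteq> 0" by simp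
    moreover have "s * of_real (sqrt (real (2*q+1))) = 1" using calculation(2) unfolding s_def by simp
    ultimately show ?thesis using aux_ssN by blast
  qed
  finally show ?thesis by simp
qed

lemma dft_diff: "dft q (\<lambda>n. a n - b n) k = dft q a k - dft q b k"
  unfolding dft_def by (simp add: sum_subtractf ring_distribs)

lemma dft_scale: "dft q (\<lambda>n. c * a n) k = of_real c * dft q a k"
  unfolding dft_def by (simp add: sum_distrib_left mult_ac)

lemma basic_facts:
  fixes l q :: nat
  assumes "odd l" "l \<ge> 3" "q = (l^2 - 1) div 2"
  shows "2*q+1 = l^2" "l < q" "real (2*q+1) = (real l)^2" "sqrt (real (2*q+1)) = real l"
proof -
  obtain m where m: "l = 2*m+1" using assms(1) oddE by blast
  have "l^2 - 1 = 2 * (2*m*m + 2*m)" unfolding m by (simp add: power2_eq_square algebra_simps)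
  then have q: "q = 2*m*m + 2*m" using assms(3) by simp
  show e: "2*q+1 = l^2" unfolding q m by (simp add: power2_eq_square algebra_simps)
  have "m \<ge> 1" using assms(2) m by simp
  then have "2*m + 1 < 2*m*m + 2*m" by (metis add_less_cancel_right le_square less_le_trans mult_2 nat_mult_1 numeral_Bit0 numeral_One one_less_numeral_iff semiring_norm(76) mult_le_mono1 add_lessD1 less_add_one add.commute mult.assoc dual_order.strict_trans2 mult_less_cancel1 nat_less_le)
  then show "l < q" unfolding q m .
  show r: "real (2*q+1) = (real l)^2" unfolding e by simp
  show "sqrt (real (2*q+1)) = real l" unfolding r by simp
qed

lemma cos_eq_0pi:
  fixes x y :: real
  assumes "0 \<le> x" "x \<le> pi" "0 \<le> y" "y \<le> pi" "cos x = cos y"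
  shows "x = y"
  using assms cos_mono_less_eq by (metis linorder_neq_iff order_less_irrefl)

lemma formula:
  fixes l q :: nat and g :: "int \<Rightarrow> real" and k :: int
  assumes "odd l" and "l \<ge> 3"
    and qd: "q = (l^2 - 1) div 2"
    and g_def: "g = (\<lambda>n. if \<bar>n\<bar> \<le> int l then sin (2 * pi * real_of_int \<bar>n\<bar> / real l) else 0)"
    and k: "\<bar>k\<bar> \<le> int q"
  shows "dft q g k =
           complex_of_real (2 * (sin (pi * real_of_int k / real l))^2 * sin (2 * pi / real l) /
             (real l * (cos (2 * pi * real_of_int k / (real l)^2) - cos (2 * pi / real l))))"
proof -
  note bf = basic_facts[OF assms(1-3)]
  have l0: "real l > 0" using assms(2) by simp
  define a where "a = pi / real l"
  define b where "b = pi * real_of_int k / (real l)^2"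
  define T where "T = (\<Sum>n=1..l. sin (2 * real n * a) * cos (2 * real n * b))"
  have la: "real l * a = pi" unfolding a_def using l0 by simp
  have lb: "real l * b = pi * real_of_int k / real l" unfolding b_def using l0 by (simp add: power2_eq_square)
  have a2: "2*a = 2 * pi / real l" unfolding a_def by simp
  have b2: "2*b = 2 * pi * real_of_int k / (real l)^2" unfolding b_def by simp
  have "dft q g k = (1 / of_real (sqrt (real (2*q+1)))) *
     complex_of_real (g 0 + (\<Sum>j=1..l. 2 * g (int j) * cos (2*pi*real_of_int k*real j/real (2*q+1))))"
  proof (rule dft_even)
    show "l \<le> q" using bf(2) by simp
    show "g n = 0" if "int l < \<bar>n\<bar>" for n using that unfolding g_def by simp
    show "g (- n) = g n" for n unfolding g_def by simp
  qed
  also have "g 0 + (\<Sum>j=1..l. 2 * g (int j) * cos (2*pi*real_of_int k*real j/real (2*q+1))) = 2 * T"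
  proof -
    have "(\<Sum>j=1..l. 2 * g (int j) * cos (2*pi*real_of_int k*real j/real (2*q+1))) = (\<Sum>j=1..l. 2 * (sin (2 * real j * a) * cos (2 * real j * b)))"
    proof (rule sum.cong[OF refl])
      fix j assume "j \<in> {1..l}"
      then have "g (int j) = sin (2 * real j * a)" unfolding g_def a_def by (simp add: mult_ac)
      moreover have "2*pi*real_of_int k*real j/real (2*q+1) = 2 * real j * b"
        unfolding b_def bf(3) by (simp add: mult_ac)
      ultimately show "2 * g (int j) * cos (2*pi*real_of_int k*real j/real (2*q+1)) = 2 * (sin (2 * real j * a) * cos (2 * real j * b))"
        by simp
    qed
    then show ?thesis unfolding T_def g_def by (simp add: sum_distrib_left)
  qed
  also have "(1 / of_real (sqrt (real (2*q+1)))) * complex_of_real (2 * T) = complex_of_real (2 * T / real l)"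
    unfolding bf(4) by simp
  also have "2 * T / real l = 2 * (sin (pi * real_of_int k / real l))^2 * sin (2 * pi / real l) /
             (real l * (cos (2 * pi * real_of_int k / (real l)^2) - cos (2 * pi / real l)))"
  proof (cases "cos (2*b) - cos (2*a) = 0")
    case True
    have bk: "2*b = 2*pi*\<bar>k\<bar>/(real l)^2 \<or> 2*b = -(2*pi*\<bar>k\<bar>/(real l)^2)"
      unfolding b2 by (cases "k \<ge> 0") auto
    have "2*b = 2*a \<or> 2*b = -(2*a)"
    proof -
      have "2*pi*\<bar>k\<bar>/(real l)^2 = 2*a"
      proof (rule cos_eq_0pi)
        have "2 * real_of_int \<bar>k\<bar> \<le> (real l)^2" using k bf(3) by simp
        then show "2*pi*\<bar>k\<bar>/(real l)^2 \<le> pi" using l0 by (simp add: field_simps)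
        show "0 \<le> 2*pi*\<bar>k\<bar>/(real l)^2" by simp
        show "0 \<le> 2*a" unfolding a_def using l0 by simp
        show "2*a \<le> pi" unfolding a_def using assms(2) by (simp add: field_simps)
        have "cos (2*pi*\<bar>k\<bar>/(real l)^2) = cos (2*b)"
          using bk by (metis cos_minus)
        then show "cos (2*pi*\<bar>k\<bar>/(real l)^2) = cos (2*a)" using True by simp
      qed
      then show ?thesis using bk by simp
    qed
    then have bpm: "b = a \<or> b = -a" by auto
    have "sin (2*a) \<noteq> 0"
    proof -
      have "0 < 2*a" "2*a < pi" unfolding a_def using l0 assms(2) by (simp_all add: field_simps)
      then show ?thesis using sin_gt_zero by fastforce
    qed
    then have "T = 0" unfolding T_def by (rule T_sum_deg[OF la _ bpm])
    then show ?thesis using True a2 b2 by simp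
  next
    case False
    have "T = (sin (real l * b))^2 * sin (2*a) / (cos (2*b) - cos (2*a))"
      using T_sum[OF la, of b] False unfolding T_def by (simp add: eq_divide_eq mult.commute)
    then have "T = (sin (pi * real_of_int k / real l))^2 * sin (2 * pi / real l) / (cos (2 * pi * real_of_int k / (real l)^2) - cos (2 * pi / real l))"
      unfolding lb a2 b2 .
    then show ?thesis by (simp add: mult.assoc)
  qed
  finally show ?thesis .
qed

lemma cos_abs_int: "cos (2*pi*real_of_int n / L) = cos (2*pi*real_of_int \<bar>n\<bar> / L)"
proof (cases "n \<ge> 0")
  case True then show ?thesis by simp
next
  case False
  then have "2*pi*real_of_int \<bar>n\<bar> / L = - (2*pi*real_of_int n / L)" by simp
  then show ?thesis by simp
qed

lemma sin_q_nz:
  fixes l q :: nat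
  assumes "odd l" "l \<ge> 3" "q = (l^2 - 1) div 2"
  shows "sin (pi * real_of_int (int q) / real l) \<noteq> 0"
proof
  note bf = basic_facts[OF assms]
  assume "sin (pi * real_of_int (int q) / real l) = 0"
  then obtain i :: int where i: "pi * real_of_int (int q) / real l = of_int i * pi"
    unfolding sin_zero_iff_int2 by blast
  have l0: "real l > 0" using assms(2) by simp
  from i have "real q = of_int i * real l" using l0 pi_gt_zero by (simp add: field_simps)
  then have "int q = i * int l" by (metis of_int_eq_iff of_int_mult of_int_of_nat_eq)
  moreover have "2 * int q + 1 = int l * int l" using bf(1) by (metis of_nat_add of_nat_mult of_nat_1 of_nat_numeral power2_eq_square)
  ultimately have "int l * (int l - 2 * i) = 1" by (simp add: algebra_simps)
  then have "int l = 1" using assms(2) by (simp add: pos_zmult_eq_1_iff)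
  with assms(2) show False by simp
qed

lemma cos_cmp:
  fixes l :: nat and n :: int
  assumes l3: "l \<ge> 3" and nl: "2 * \<bar>n\<bar> \<le> int (l^2)"
  shows "int l \<le> \<bar>n\<bar> \<Longrightarrow> cos (2*pi*real_of_int n / (real l)^2) \<le> cos (2*pi / real l)"
    and "int l < \<bar>n\<bar> \<Longrightarrow> cos (2*pi*real_of_int n / (real l)^2) < cos (2*pi / real l)"
    and "\<bar>n\<bar> \<le> int l \<Longrightarrow> cos (2*pi / real l) \<le> cos (2*pi*real_of_int n / (real l)^2)"
proof -
  have l0: "real l > 0" using l3 by simp
  have e: "2*pi / real l = 2*pi*real l / (real l)^2" using l0 by (simp add: power2_eq_square)
  have up: "2*pi*real_of_int \<bar>n\<bar> / (real l)^2 \<le> pi"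
  proof -
    have "2 * real_of_int \<bar>n\<bar> \<le> (real l)^2" using nl by (metis of_int_le_iff of_int_mult of_int_numeral of_int_of_nat_eq of_nat_power)
    then show ?thesis using l0 by (simp add: field_simps)
  qed
  have lp: "2*pi / real l \<le> pi" using l3 by (simp add: field_simps)
  have mono: "2*pi*x / (real l)^2 \<le> 2*pi*y / (real l)^2" if "x \<le> y" for x y
    using that l0 by (simp add: divide_right_mono)
  have smono: "2*pi*x / (real l)^2 < 2*pi*y / (real l)^2" if "x < y" for x y
    using that l0 by (simp add: divide_strict_right_mono)
  show "cos (2*pi*real_of_int n / (real l)^2) \<le> cos (2*pi / real l)" if "int l \<le> \<bar>n\<bar>"
  proof -
    have "2*pi / real l \<le> 2*pi*real_of_int \<bar>n\<bar> / (real l)^2" unfolding e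
      by (rule mono) (use that in \<open>simp add: of_int_le_iff[symmetric]\<close>)
    then show ?thesis unfolding cos_abs_int[of n] using up l0
      by (intro cos_monotone_0_pi_le) auto
  qed
  show "cos (2*pi*real_of_int n / (real l)^2) < cos (2*pi / real l)" if "int l < \<bar>n\<bar>"
  proof -
    have "2*pi / real l < 2*pi*real_of_int \<bar>n\<bar> / (real l)^2" unfolding e
      by (rule smono) (use that in \<open>simp add: of_int_less_iff[symmetric]\<close>)
    then show ?thesis unfolding cos_abs_int[of n] using up l0
      by (intro cos_monotone_0_pi) auto
  qed
  show "cos (2*pi / real l) \<le> cos (2*pi*real_of_int n / (real l)^2)" if "\<bar>n\<bar> \<le> int l"
  proof -
    have "2*pi*real_of_int \<bar>n\<bar> / (real l)^2 \<le> 2*pi / real l" unfolding e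
      by (rule mono) (use that in \<open>simp add: of_int_le_iff[symmetric]\<close>)
    then show ?thesis unfolding cos_abs_int[of n] using lp
      by (intro cos_monotone_0_pi_le) auto
  qed
qed

theorem mainTheorem16:
  fixes l q :: nat and g fstar :: "int \<Rightarrow> real"
  assumes "odd l" and "l \<ge> 3"
    and "q = (l^2 - 1) div 2"
    and g_def: "g = (\<lambda>n. if \<bar>n\<bar> \<le> int l then sin (2 * pi * real_of_int \<bar>n\<bar> / real l) else 0)"
    and fstar_def: "fstar = (\<lambda>n. g n - Re (dft q g n))"
  shows "(\<forall>n. \<bar>n\<bar> \<le> int q \<longrightarrow> dft q g n =
           complex_of_real (2 * (sin (pi * real_of_int n / real l))^2 * sin (2 * pi / real l) /
             (real l * (cos (2 * pi * real_of_int n / (real l)^2) - cos (2 * pi / real l)))))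
    \<and> (\<forall>n. \<bar>n\<bar> \<le> int q \<longrightarrow> dft q fstar n = - complex_of_real (fstar n))
    \<and> fstar 0 = 0
    \<and> (\<forall>n. int l \<le> \<bar>n\<bar> \<and> \<bar>n\<bar> \<le> int q \<longrightarrow> fstar n \<ge> 0)
    \<and> (\<exists>c>0. (\<lambda>n. c * fstar n) \<in> A_disc (-1) q \<and> k_sf (-1) q (\<lambda>n. c * fstar n) = l)
    \<and> AA_disc (-1) q \<le> l"
proof -
  note bf = basic_facts[OF assms(1-3)]
  have l0: "real l > 0" using assms(2) by simp
  define F where "F = (\<lambda>k::int. 2 * (sin (pi * real_of_int k / real l))^2 * sin (2 * pi / real l) /
             (real l * (cos (2 * pi * real_of_int k / (real l)^2) - cos (2 * pi / real l))))"
  have P1: "\<forall>n. \<bar>n\<bar> \<le> int q \<longrightarrow> dft q g n = complex_of_real (F n)"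
    using formula[OF assms(1-4)] unfolding F_def by blast
  have fs: "fstar n = g n - F n" if "\<bar>n\<bar> \<le> int q" for n
    unfolding fstar_def using P1 that by simp
  have gev: "g (-n) = g n" for n unfolding g_def by simp
  have Fev: "F (-n) = F n" for n
  proof -
    have "cos (2 * pi * real_of_int (-n) / (real l)^2) = cos (2 * pi * real_of_int n / (real l)^2)"
      using cos_abs_int[of "-n"] cos_abs_int[of n] by simp
    moreover have "(sin (pi * real_of_int (-n) / real l))^2 = (sin (pi * real_of_int n / real l))^2"
    proof -
      have "pi * real_of_int (-n) / real l = - (pi * real_of_int n / real l)" by simp
      then show ?thesis by simp
    qed
    ultimately show ?thesis unfolding F_def by simp
  qed
  have fev: "fstar (-n) = fstar n" if "\<bar>n\<bar> \<le> int q" for n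
    using fs[of n] fs[of "-n"] that gev Fev by simp
  have s2: "sin (2 * pi / real l) > 0"
    by (rule sin_gt_zero) (use l0 assms(2) in \<open>simp_all add: field_simps\<close>)
  have nl2: "2 * \<bar>n\<bar> \<le> int (l^2)" if "\<bar>n\<bar> \<le> int q" for n
    using that bf(1) by linarith
  have P2: "\<forall>n. \<bar>n\<bar> \<le> int q \<longrightarrow> dft q fstar n = - complex_of_real (fstar n)"
  proof (intro allI impI)
    fix n assume n: "\<bar>n\<bar> \<le> int q"
    have "dft q fstar n = dft q g n - dft q (\<lambda>m. Re (dft q g m)) n"
      unfolding fstar_def by (rule dft_diff)
    also have "dft q (\<lambda>m. Re (dft q g m)) n = of_real (g (-n))"
      by (rule dft_dft) (use P1 n in auto)
    finally show "dft q fstar n = - complex_of_real (fstar n)"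
      using P1 n fs[OF n] gev by simp
  qed
  have P3: "fstar 0 = 0" using fs[of 0] unfolding g_def F_def by simp
  have Fle: "F n \<le> 0" if "int l \<le> \<bar>n\<bar>" "\<bar>n\<bar> \<le> int q" for n
  proof -
    have "cos (2 * pi * real_of_int n / (real l)^2) - cos (2 * pi / real l) \<le> 0"
      using cos_cmp(1)[OF assms(2) nl2[OF that(2)] that(1)] by simp
    then have "real l * (cos (2 * pi * real_of_int n / (real l)^2) - cos (2 * pi / real l)) \<le> 0"
      using l0 by (simp add: mult_nonneg_nonpos)
    moreover have "0 \<le> 2 * (sin (pi * real_of_int n / real l))^2 * sin (2 * pi / real l)" using s2 by simp
    ultimately show ?thesis unfolding F_def by (rule divide_nonneg_nonpos[rotated])
  qed
  have P4: "\<forall>n. int l \<le> \<bar>n\<bar> \<and> \<bar>n\<bar> \<le> int q \<longrightarrow> fstar n \<ge> 0"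
  proof (intro allI impI)
    fix n assume n: "int l \<le> \<bar>n\<bar> \<and> \<bar>n\<bar> \<le> int q"
    have "g n = 0"
    proof (cases "\<bar>n\<bar> = int l")
      case True
      then have "2 * pi * real_of_int \<bar>n\<bar> / real l = 2 * pi" using l0 by simp
      then show ?thesis unfolding g_def using True by simp
    next
      case False then show ?thesis unfolding g_def using n by simp
    qed
    then show "fstar n \<ge> 0" using fs[of n] n Fle[of n] by simp
  qed
  have qq: "\<bar>int q\<bar> \<le> int q" "\<bar>- int q\<bar> \<le> int q" by simp_all
  have Fq: "F (int q) < 0"
  proof -
    have "cos (2 * pi * real_of_int (int q) / (real l)^2) - cos (2 * pi / real l) < 0"
      using cos_cmp(2)[OF assms(2) nl2[OF qq(1)]] bf(2) by simp
    then have "real l * (cos (2 * pi * real_of_int (int q) / (real l)^2) - cos (2 * pi / real l)) < 0"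
      using l0 by (simp add: mult_pos_neg)
    moreover have "0 < 2 * (sin (pi * real_of_int (int q) / real l))^2 * sin (2 * pi / real l)"
      using s2 sin_q_nz[OF assms(1-3)] by simp
    ultimately show ?thesis unfolding F_def by (rule divide_pos_neg[rotated])
  qed
  have gq: "g (int q) = 0" unfolding g_def using bf(2) by simp
  have fq: "fstar (int q) > 0" using fs[OF qq(1)] gq Fq by simp
  define c where "c = 1 / fstar (int q)"
  have c0: "c > 0" unfolding c_def using fq by simp
  have cq: "c * fstar (int q) = 1" unfolding c_def using fq by simp
  have cmq: "c * fstar (- int q) = 1" using cq fev[OF qq(1)] by simp
  define h where "h = (\<lambda>n. c * fstar n)"
  have Dh: "Re (dft q h n) = - (c * fstar n)" if "\<bar>n\<bar> \<le> int q" for n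
    unfolding h_def dft_scale using P2 that by simp
  have hA: "h \<in> A_disc (-1) q"
    unfolding A_disc_def even_disc_def
  proof (intro CollectI conjI allI impI)
    show "h (- n) = h n" if "\<bar>n\<bar> \<le> int q" for n unfolding h_def using fev[OF that] by simp
    show "-1 * h 0 \<le> 0" unfolding h_def P3 by simp
    show "Re (dft q h 0) \<le> 0" using Dh[of 0] P3 by simp
    show "h (int q) \<ge> 1" unfolding h_def using cq by simp
    show "h (- int q) \<ge> 1" unfolding h_def using cmq by simp
    show "-1 * Re (dft q h (int q)) \<ge> 1" using Dh[OF qq(1)] cq by simp
    show "-1 * Re (dft q h (- int q)) \<ge> 1" using Dh[OF qq(2)] cmq by simp
  qed
  have hk: "k_sf (-1) q h = l"
    unfolding k_sf_def
  proof (rule Least_equality)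
    show "\<forall>n. int l \<le> \<bar>n\<bar> \<and> \<bar>n\<bar> \<le> int q \<longrightarrow> h n \<ge> 0 \<and> -1 * Re (dft q h n) \<ge> 0"
    proof (intro allI impI)
      fix n assume n: "int l \<le> \<bar>n\<bar> \<and> \<bar>n\<bar> \<le> int q"
      have "fstar n \<ge> 0" using P4 n by blast
      then show "h n \<ge> 0 \<and> -1 * Re (dft q h n) \<ge> 0" using Dh[of n] n c0 unfolding h_def by simp
    qed
  next
    fix k assume k: "\<forall>n. int k \<le> \<bar>n\<bar> \<and> \<bar>n\<bar> \<le> int q \<longrightarrow> h n \<ge> 0 \<and> -1 * Re (dft q h n) \<ge> 0"
    show "l \<le> k"
    proof (rule ccontr)
      assume "\<not> l \<le> k"
      define m where "m = int l - 1"
      have m: "int k \<le> \<bar>m\<bar>" "\<bar>m\<bar> \<le> int q" "\<bar>m\<bar> \<le> int l" "\<bar>m\<bar> = m"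
        unfolding m_def using \<open>\<not> l \<le> k\<close> bf(2) assms(2) by auto
      have "h m \<ge> 0" using k m by blast
      moreover have "fstar m < 0"
      proof -
        have "g m = sin (2 * pi - 2 * pi / real l)"
        proof -
          have "2 * pi * real_of_int \<bar>m\<bar> / real l = 2 * pi - 2 * pi / real l"
            unfolding m(4) m_def using l0 by (simp add: field_simps)
          then show ?thesis unfolding g_def using m(3) by simp
        qed
        also have "\<dots> = - sin (2 * pi / real l)" by (simp add: sin_diff)
        finally have gm: "g m < 0" using s2 by simp
        have "cos (2 * pi / real l) \<le> cos (2 * pi * real_of_int m / (real l)^2)"
          using cos_cmp(3)[OF assms(2) nl2[OF m(2)] m(3)] .
        then have "0 \<le> real l * (cos (2 * pi * real_of_int m / (real l)^2) - cos (2 * pi / real l))"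
          using l0 by simp
        moreover have "0 \<le> 2 * (sin (pi * real_of_int m / real l))^2 * sin (2 * pi / real l)" using s2 by simp
        ultimately have "F m \<ge> 0" unfolding F_def by simp
        then show ?thesis using fs[OF m(2)] gm by simp
      qed
      ultimately show False using c0 mult_pos_neg[of c "fstar m"] unfolding h_def by linarith
    qed
  qed
  have P5: "\<exists>c>0. (\<lambda>n. c * fstar n) \<in> A_disc (-1) q \<and> k_sf (-1) q (\<lambda>n. c * fstar n) = l"
    using c0 hA hk unfolding h_def by blast
  have P6: "AA_disc (-1) q \<le> l"
    unfolding AA_disc_def
  proof (rule cInf_lower)
    show "l \<in> k_sf (-1) q ` A_disc (-1) q" using hA hk by (metis image_eqI)
    show "bdd_below (k_sf (-1) q ` A_disc (-1) q)" by (rule bdd_belowI[of _ 0]) simp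
  qed
  show ?thesis using P1 P2 P3 P4 P5 P6 unfolding F_def by blast
qed

end
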